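(* For every positive integer $n$, $$\big((\mathrm{Id}\cdot\varphi)\ast\delta\big)(n)=n\,\delta(n)-\big(\mathrm{Id}\ast(\varphi\delta)\big)(n),$$ where $\mathrm{Id}\cdot\varphi$ is $n\mapsto n\varphi(n)$ and $\varphi\delta$ is the pointwise product.
   Context: The arithmetic derivative $\delta$ is defined by $\delta(p)=1$ for every prime $p$ and $\delta(mn)=m\delta(n)+n\delta(m)$ for all positive integers $m,n$; equivalently $\delta(1)=0$ and $\delta(n)=n\sum_{p^\alpha\| n}\alpha/p$. $\mathrm{Id}(n)=n$, $\varphi$ is Euler's totient function. The Dirichlet convolution is $(u\ast v)(n)=\sum_{d\mid n}u(d)v(n/d)$. *)

theory Defs
  imports "HOL-Number_Theory.Number_Theory"
begin

text \<open>Arithmetic derivative: delta(n) = n * sum over p^a || n of a/p, delta(0)=delta(1)=0.\<close>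
definition arith_deriv :: "nat \<Rightarrow> nat" where
  "arith_deriv n = (\<Sum>p\<in>prime_factors n. multiplicity p n * (n div p))"

definition dirichlet_conv :: "(nat \<Rightarrow> int) \<Rightarrow> (nat \<Rightarrow> int) \<Rightarrow> nat \<Rightarrow> int" where
  "dirichlet_conv u v n = (\<Sum>d | d dvd n. u d * v (n div d))"

end

theory Submission
  imports Defs
begin

definition LL :: "nat \<Rightarrow> real" where
  "LL n = (\<Sum>p\<in>prime_factors n. real (multiplicity p n) / real p)"

lemma LL_super:
  assumes "n > 0" "finite S" "prime_factors n \<subseteq> S" "\<forall>p\<in>S. prime p"
  shows "LL n = (\<Sum>p\<in>S. real (multiplicity p n) / real p)"
  unfolding LL_def
proof (rule sum.mono_neutral_left[OF assms(2,3)])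
  show "\<forall>i\<in>S - prime_factors n. real (multiplicity i n) / real i = 0"
  proof
    fix p assume "p \<in> S - prime_factors n"
    then have "prime p" "\<not> p dvd n" using assms by (auto simp: prime_factors_dvd)
    then show "real (multiplicity p n) / real p = 0" by (simp add: not_dvd_imp_multiplicity_0)
  qed
qed

lemma deriv_LL:
  assumes "n > 0"
  shows "real (arith_deriv n) = real n * LL n"
proof -
  have "real (arith_deriv n) = (\<Sum>p\<in>prime_factors n. real (multiplicity p n) * (real n / real p))"
    unfolding arith_deriv_def of_nat_sum
    by (intro sum.cong refl) (simp add: real_of_nat_div in_prime_factors_imp_dvd)
  also have "\<dots> = real n * LL n"
    unfolding LL_def sum_distrib_left by (intro sum.cong refl) simp
  finally show ?thesis .
qed

lemma LL_mult:
  assumes "a > 0" "b > 0"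
  shows "LL (a * b) = LL a + LL b"
proof -
  define S where "S = prime_factors a \<union> prime_factors b"
  have fin: "finite S" and pr: "\<forall>p\<in>S. prime p" unfolding S_def by auto
  have "prime_factors (a*b) = S" unfolding S_def using assms by (simp add: prime_factors_product)
  then have "LL (a*b) = (\<Sum>p\<in>S. real (multiplicity p (a*b)) / real p)"
    using LL_super[of "a*b" S] assms fin pr by auto
  also have "\<dots> = (\<Sum>p\<in>S. real (multiplicity p a) / real p + real (multiplicity p b) / real p)"
    using pr assms by (intro sum.cong refl) (simp add: prime_elem_multiplicity_mult_distrib add_divide_distrib)
  also have "\<dots> = LL a + LL b"
    using LL_super[of a S] LL_super[of b S] assms fin pr unfolding S_def
    by (simp add: sum.distrib)
  finally show ?thesis .
qed

lemma leibniz: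
  assumes "a > 0" "b > 0"
  shows "int (arith_deriv (a*b)) = int a * int (arith_deriv b) + int b * int (arith_deriv a)"
proof -
  have "real (arith_deriv (a*b)) = real a * real (arith_deriv b) + real b * real (arith_deriv a)"
    using assms by (simp add: deriv_LL LL_mult algebra_simps)
  then have "real (arith_deriv (a*b)) = real (a * arith_deriv b + b * arith_deriv a)" by simp
  then have "arith_deriv (a*b) = a * arith_deriv b + b * arith_deriv a" using of_nat_eq_iff by blast
  then show ?thesis by simp
qed

theorem corollary2p7:
  fixes n :: nat
  assumes "n > 0"
  shows "dirichlet_conv (\<lambda>k. int k * int (totient k)) (\<lambda>k. int (arith_deriv k)) n
         = int n * int (arith_deriv n)
           - dirichlet_conv (\<lambda>k. int k) (\<lambda>k. int (totient k) * int (arith_deriv k)) n"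
proof -
  let ?D = "{d. d dvd n}"
  have reidx: "dirichlet_conv (\<lambda>k. int k) (\<lambda>k. int (totient k) * int (arith_deriv k)) n
     = (\<Sum>d\<in>?D. int (n div d) * (int (totient d) * int (arith_deriv d)))"
    unfolding dirichlet_conv_def
    by (rule sum.reindex_bij_witness[of _ "\<lambda>d. n div d" "\<lambda>d. n div d"])
       (use assms in \<open>auto simp: dvd_div_eq_mult div_div_eq_right\<close>)
  have key: "\<And>d. d \<in> ?D \<Longrightarrow> int d * int (totient d) * int (arith_deriv (n div d))
      + int (n div d) * (int (totient d) * int (arith_deriv d)) = int (totient d) * int (arith_deriv n)"
  proof -
    fix d assume "d \<in> ?D"
    then have dn: "d dvd n" by simp
    then have pos: "d > 0" "n div d > 0" using assms by (auto intro: Nat.gr0I simp: dvd_div_eq_0_iff)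
    have "n = d * (n div d)" using dn by simp
    then have "int (arith_deriv n) = int d * int (arith_deriv (n div d)) + int (n div d) * int (arith_deriv d)"
      using leibniz[OF pos] by metis
    then show "int d * int (totient d) * int (arith_deriv (n div d))
      + int (n div d) * (int (totient d) * int (arith_deriv d)) = int (totient d) * int (arith_deriv n)"
      by (simp add: algebra_simps)
  qed
  have "dirichlet_conv (\<lambda>k. int k * int (totient k)) (\<lambda>k. int (arith_deriv k)) n
     + dirichlet_conv (\<lambda>k. int k) (\<lambda>k. int (totient k) * int (arith_deriv k)) n
     = (\<Sum>d\<in>?D. int (totient d) * int (arith_deriv n))"
    unfolding reidx unfolding dirichlet_conv_def sum.distrib[symmetric]
    by (intro sum.cong refl) (use key in auto)
  also have "\<dots> = int (\<Sum>d\<in>?D. totient d) * int (arith_deriv n)"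
    by (simp add: sum_distrib_right)
  also have "\<dots> = int n * int (arith_deriv n)" by (simp add: totient_divisor_sum)
  finally show ?thesis by linarith
qed

end
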